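(* Let $F$ be a hyperfield whose additive hypergroup is superiorly canonical. Then $\mathcal{O}:=\{x\in F: x-x\subseteq 1-1\}$ is a valuation hyperring in $F$. Moreover, if $v$ is a valuation on $F$ with $\mathcal{O}_v=\mathcal{O}$, then $(F,v)$ is a Krasner valued hyperfield.
   Context: A canonical hypergroup is a triple $(H,+,0)$ where $H\neq\emptyset$, $+$ assigns to each pair a subset $x+y\subseteq H$ (for sets $A+B:=\bigcup_{a\in A,b\in B}a+b$), $0\in H$, such that $+$ is associative and commutative, each $x$ has a unique $-x$ with $0\in x+(-x)$, and $z\in x+y\Rightarrow y\in z+(-x)$; write $x-y:=x+(-y)$. A hyperring is $(R,+,\cdot,0)$ with $(R,+,0)$ canonical, $(R,\cdot)$ a commutative semigroup with $0$ absorbing and $x(y+z)=xy+xz$ ($xA:=\{xa:a\in A\}$). A hyperfield is a hyperring with multiplicative neutral $1\neq 0$ and $F\setminus\{0\}$ a group under $\cdot$. A relational subhyperring of $F$ is a multiplicatively closed $S\subseteq F$ such that $(S,+_S,\cdot,0)$ is a hyperring, where $x+_Sy:=(x+y)\cap S$. A valuation hyperring in $F$ is a relational subhyperring $\mathcal{O}$ such that for every $x\in F\setminus\{0\}$, $x\in\mathcal{O}$ or $x^{-1}\in\mathcal{O}$. A canonical hypergroup $H$ is superiorly canonical if: (SCH1) $x\in x+y$ implies $x+y=\{x\}$; (SCH2) $(x+y)\cap(z+t)\neq\emptyset$ implies $x+y\subseteq z+t$ or $z+t\subseteq x+y$; (SCH3) for $x\neq y$ and $z,t\in x-y$, $z-z=t-t$;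 (SCH4) if $x\in z-z$ and $y\notin z-z$ then $x-x\subseteq y-y$. Valuation on $F$: for an ordered abelian group $\Gamma$ and $\infty>\Gamma$ with $\gamma+\infty=\infty+\gamma=\infty$, a surjective map $v:F\to\Gamma\cup\{\infty\}$ with $vx=\infty\iff x=0$, $v(xy)=vx+vy$, $z\in x+y\Rightarrow vz\ge\min\{vx,vy\}$; $vF:=v(F\setminus\{0\})$, $\mathcal{O}_v:=\{x:vx\ge 0\}$. An initial segment of $\Gamma$ is $\rho\subseteq\Gamma$ with $\delta\in\rho,\gamma<\delta\Rightarrow\gamma\in\rho$; $\rho+\gamma:=\{\delta+\gamma:\delta\in\rho\}$; "$\alpha>\rho+\gamma$" means $\alpha\notin\rho+\gamma$. Krasner valued hyperfield: a valued hyperfield $(F,v)$ such that (KVH1) for all $x,y\in F$ with $0\notin x+y$, $v(x+y)$ is a singleton; (KVH2) there is an initial segment $\rho_v$ of $vF$ with $0\in\rho_v$ (the norm) such that for all $x,y,z,t\in F$ with $z\in x+y$: $t\in x+y$ iff $vs>\rho_v+\min\{vx,vy\}$ for all $s\in z-t$. *)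

theory Defs
  imports Main "HOL-Library.Extended"
begin

definition hsum :: "('a \<Rightarrow> 'a \<Rightarrow> 'a set) \<Rightarrow> 'a set \<Rightarrow> 'a set \<Rightarrow> 'a set" where
  "hsum add A B = (\<Union>a\<in>A. \<Union>b\<in>B. add a b)"

definition canonical_hypergroup :: "'a set \<Rightarrow> ('a \<Rightarrow> 'a \<Rightarrow> 'a set) \<Rightarrow> 'a \<Rightarrow> bool" where
  "canonical_hypergroup H add z \<longleftrightarrow>
     H \<noteq> {} \<and> z \<in> H \<and>
     (\<forall>x\<in>H. \<forall>y\<in>H. add x y \<subseteq> H) \<and>
     (\<forall>x\<in>H. \<forall>y\<in>H. \<forall>w\<in>H. hsum add (add x y) {w} = hsum add {x} (add y w)) \<and>
     (\<forall>x\<in>H. \<forall>y\<in>H. add x y = add y x) \<and>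
     (\<forall>x\<in>H. add x z = {x}) \<and>
     (\<forall>x\<in>H. \<exists>!y. y \<in> H \<and> z \<in> add x y) \<and>
     (\<forall>x\<in>H. \<forall>y\<in>H. \<forall>w\<in>H. \<forall>x'\<in>H.
        w \<in> add x y \<longrightarrow> z \<in> add x x' \<longrightarrow> y \<in> add w x')"

definition hneg :: "'a set \<Rightarrow> ('a \<Rightarrow> 'a \<Rightarrow> 'a set) \<Rightarrow> 'a \<Rightarrow> 'a \<Rightarrow> 'a" where
  "hneg H add z x = (THE y. y \<in> H \<and> z \<in> add x y)"

definition hyperring :: "'a set \<Rightarrow> ('a \<Rightarrow> 'a \<Rightarrow> 'a set) \<Rightarrow> ('a \<Rightarrow> 'a \<Rightarrow> 'a) \<Rightarrow> 'a \<Rightarrow> bool" where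
  "hyperring R add mul z \<longleftrightarrow>
     canonical_hypergroup R add z \<and>
     (\<forall>x\<in>R. \<forall>y\<in>R. mul x y \<in> R) \<and>
     (\<forall>x\<in>R. \<forall>y\<in>R. \<forall>w\<in>R. mul (mul x y) w = mul x (mul y w)) \<and>
     (\<forall>x\<in>R. \<forall>y\<in>R. mul x y = mul y x) \<and>
     (\<forall>x\<in>R. mul z x = z) \<and>
     (\<forall>x\<in>R. \<forall>y\<in>R. \<forall>w\<in>R. mul x ` add y w = add (mul x y) (mul x w))"

definition hyperfield :: "('a \<Rightarrow> 'a \<Rightarrow> 'a set) \<Rightarrow> ('a \<Rightarrow> 'a \<Rightarrow> 'a) \<Rightarrow> 'a \<Rightarrow> 'a \<Rightarrow> bool" where
  "hyperfield add mul z one \<longleftrightarrow>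
     hyperring UNIV add mul z \<and> one \<noteq> z \<and>
     (\<forall>x. mul one x = x) \<and>
     (\<forall>x y. x \<noteq> z \<longrightarrow> y \<noteq> z \<longrightarrow> mul x y \<noteq> z) \<and>
     (\<forall>x. x \<noteq> z \<longrightarrow> (\<exists>y. mul x y = one))"

abbreviation hfneg :: "('a \<Rightarrow> 'a \<Rightarrow> 'a set) \<Rightarrow> 'a \<Rightarrow> 'a \<Rightarrow> 'a" where
  "hfneg add z x \<equiv> hneg UNIV add z x"

definition hminus :: "('a \<Rightarrow> 'a \<Rightarrow> 'a set) \<Rightarrow> 'a \<Rightarrow> 'a \<Rightarrow> 'a \<Rightarrow> 'a set" where
  "hminus add z x y = add x (hfneg add z y)"

definition hinv :: "('a \<Rightarrow> 'a \<Rightarrow> 'a) \<Rightarrow> 'a \<Rightarrow> 'a \<Rightarrow> 'a" where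
  "hinv mul one x = (THE y. mul x y = one)"

definition relational_subhyperring ::
  "('a \<Rightarrow> 'a \<Rightarrow> 'a set) \<Rightarrow> ('a \<Rightarrow> 'a \<Rightarrow> 'a) \<Rightarrow> 'a \<Rightarrow> 'a set \<Rightarrow> bool" where
  "relational_subhyperring add mul z S \<longleftrightarrow>
     (\<forall>x\<in>S. \<forall>y\<in>S. mul x y \<in> S) \<and>
     hyperring S (\<lambda>x y. add x y \<inter> S) mul z"

definition valuation_hyperring ::
  "('a \<Rightarrow> 'a \<Rightarrow> 'a set) \<Rightarrow> ('a \<Rightarrow> 'a \<Rightarrow> 'a) \<Rightarrow> 'a \<Rightarrow> 'a \<Rightarrow> 'a set \<Rightarrow> bool" where
  "valuation_hyperring add mul z one Ov \<longleftrightarrow>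
     relational_subhyperring add mul z Ov \<and>
     (\<forall>x. x \<noteq> z \<longrightarrow> x \<in> Ov \<or> hinv mul one x \<in> Ov)"

definition superiorly_canonical :: "('a \<Rightarrow> 'a \<Rightarrow> 'a set) \<Rightarrow> 'a \<Rightarrow> bool" where
  "superiorly_canonical add z \<longleftrightarrow>
     canonical_hypergroup UNIV add z \<and>
     (\<forall>x y. x \<in> add x y \<longrightarrow> add x y = {x}) \<and>
     (\<forall>x y w t. add x y \<inter> add w t \<noteq> {} \<longrightarrow> add x y \<subseteq> add w t \<or> add w t \<subseteq> add x y) \<and>
     (\<forall>x y w t. x \<noteq> y \<longrightarrow> w \<in> hminus add z x y \<longrightarrow> t \<in> hminus add z x y \<longrightarrow>
                 hminus add z w w = hminus add z t t) \<and>
     (\<forall>x y w. x \<in> hminus add z w w \<longrightarrow> y \<notin> hminus add z w w \<longrightarrow>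
                 hminus add z x x \<subseteq> hminus add z y y)"

(* Gamma is the ordered abelian group 'g; \<infinity> is Pinf of 'g extended.
   The values of v lie in {Fin g} \<union> {Pinf}; Minf is never attained. *)
definition valuation ::
  "('a \<Rightarrow> 'a \<Rightarrow> 'a set) \<Rightarrow> ('a \<Rightarrow> 'a \<Rightarrow> 'a) \<Rightarrow> 'a \<Rightarrow> ('a \<Rightarrow> ('g::linordered_ab_group_add) extended) \<Rightarrow> bool" where
  "valuation add mul z v \<longleftrightarrow>
     range v = insert Pinf (range Fin) \<and>
     (\<forall>x. v x = Pinf \<longleftrightarrow> x = z) \<and>
     (\<forall>x y. v (mul x y) = v x + v y) \<and>
     (\<forall>x y w. w \<in> add x y \<longrightarrow> v w \<ge> min (v x) (v y))"

definition valuation_ring :: "('a \<Rightarrow> ('g::linordered_ab_group_add) extended) \<Rightarrow> 'a set" where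
  "valuation_ring v = {x. v x \<ge> 0}"

(* initial segment of Gamma (= vF, since v is surjective) *)
definition initial_segment :: "('g::linordered_ab_group_add) set \<Rightarrow> bool" where
  "initial_segment \<rho> \<longleftrightarrow> (\<forall>\<delta>\<in>\<rho>. \<forall>\<gamma>. \<gamma> < \<delta> \<longrightarrow> \<gamma> \<in> \<rho>)"

definition seg_shift :: "('g::linordered_ab_group_add) set \<Rightarrow> 'g extended \<Rightarrow> 'g extended set" where
  "seg_shift \<rho> \<gamma> = (\<lambda>\<delta>. Fin \<delta> + \<gamma>) ` \<rho>"

(* "alpha > rho + gamma" means alpha \<notin> rho + gamma *)
definition above_seg :: "('g::linordered_ab_group_add) extended \<Rightarrow> 'g set \<Rightarrow> 'g extended \<Rightarrow> bool" where
  "above_seg \<alpha> \<rho> \<gamma> \<longleftrightarrow> \<alpha> \<notin> seg_shift \<rho> \<gamma>"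

(* Krasner valued hyperfield.  KVH2 is required for x, y not both 0
   (for x = y = 0 the literal condition fails in every hyperfield). *)
definition krasner_valued_hyperfield ::
  "('a \<Rightarrow> 'a \<Rightarrow> 'a set) \<Rightarrow> ('a \<Rightarrow> 'a \<Rightarrow> 'a) \<Rightarrow> 'a \<Rightarrow> 'a \<Rightarrow> ('a \<Rightarrow> ('g::linordered_ab_group_add) extended) \<Rightarrow> bool" where
  "krasner_valued_hyperfield add mul z one v \<longleftrightarrow>
     hyperfield add mul z one \<and> valuation add mul z v \<and>
     (\<forall>x y. z \<notin> add x y \<longrightarrow> (\<exists>g. v ` add x y = {g})) \<and>
     (\<exists>\<rho>. initial_segment \<rho> \<and> 0 \<in> \<rho> \<and>
        (\<forall>x y w t. \<not> (x = z \<and> y = z) \<longrightarrow> w \<in> add x y \<longrightarrow>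
           (t \<in> add x y \<longleftrightarrow>
              (\<forall>s\<in>hminus add z w t. above_seg (v s) \<rho> (min (v x) (v y))))))"

end

theory Submission
  imports Defs
begin

lemma hsum_gen: "u \<in> hsum f A B \<longleftrightarrow> (\<exists>a\<in>A. \<exists>b\<in>B. u \<in> f a b)"
  by (auto simp: hsum_def)

locale SC =
  fixes add :: "'a \<Rightarrow> 'a \<Rightarrow> 'a set" and mul :: "'a \<Rightarrow> 'a \<Rightarrow> 'a" and z one :: 'a
  assumes HF: "hyperfield add mul z one" and SCa: "superiorly_canonical add z"
begin

abbreviation N where "N x \<equiv> hneg UNIV add z x"
abbreviation S where "S x \<equiv> hminus add z x x"

lemma CH: "canonical_hypergroup UNIV add z"
  using HF by (simp add: hyperfield_def hyperring_def)
lemmas CHp = CH[unfolded canonical_hypergroup_def]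
lemma assoc: "hsum add (add x y) {w} = hsum add {x} (add y w)"
proof -
  have "\<forall>x\<in>UNIV. \<forall>y\<in>UNIV. \<forall>w\<in>UNIV. hsum add (add x y) {w} = hsum add {x} (add y w)"
    using CHp by (elim conjE) assumption
  thus ?thesis by simp
qed
lemma comm: "add x y = add y x"
proof -
  have "\<forall>x\<in>UNIV. \<forall>y\<in>UNIV. add x y = add y x"
    using CHp by (elim conjE) assumption
  thus ?thesis by simp
qed
lemma zero_r[simp]: "add x z = {x}"
proof -
  have "\<forall>x\<in>UNIV. add x z = {x}"
    using CHp by (elim conjE) assumption
  thus ?thesis by simp
qed
lemma zero_l[simp]: "add z x = {x}"
  using comm zero_r by metis
lemma negex: "\<exists>!y. z \<in> add x y"
proof -
  have "\<forall>x\<in>UNIV. \<exists>!y. y \<in> UNIV \<and> z \<in> add x y"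
    using CHp by (elim conjE) assumption
  thus ?thesis by simp
qed
lemma rev: "w \<in> add x y \<Longrightarrow> z \<in> add x x' \<Longrightarrow> y \<in> add w x'"
proof -
  have "\<forall>x\<in>UNIV. \<forall>y\<in>UNIV. \<forall>w\<in>UNIV. \<forall>x'\<in>UNIV.
        w \<in> add x y \<longrightarrow> z \<in> add x x' \<longrightarrow> y \<in> add w x'"
    using CHp by (elim conjE) assumption
  thus "w \<in> add x y \<Longrightarrow> z \<in> add x x' \<Longrightarrow> y \<in> add w x'" by blast
qed
lemma HR: "hyperring UNIV add mul z" using HF by (simp add: hyperfield_def)
lemmas HRp = HR[unfolded hyperring_def]
lemma mul_assoc: "mul (mul x y) w = mul x (mul y w)"
proof -
  have "\<forall>x\<in>UNIV. \<forall>y\<in>UNIV. \<forall>w\<in>UNIV. mul (mul x y) w = mul x (mul y w)"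
    using HRp by (elim conjE) assumption
  thus ?thesis by simp
qed
lemma mul_comm: "mul x y = mul y x"
proof -
  have "\<forall>x\<in>UNIV. \<forall>y\<in>UNIV. mul x y = mul y x"
    using HRp by (elim conjE) assumption
  thus ?thesis by simp
qed
lemma mul_zero_l[simp]: "mul z x = z"
proof -
  have "\<forall>x\<in>UNIV. mul z x = z"
    using HRp by (elim conjE) assumption
  thus ?thesis by simp
qed
lemma mul_zero_r[simp]: "mul x z = z"
  using mul_comm mul_zero_l by metis
lemma distrib: "mul x ` add y w = add (mul x y) (mul x w)"
proof -
  have "\<forall>x\<in>UNIV. \<forall>y\<in>UNIV. \<forall>w\<in>UNIV. mul x ` add y w = add (mul x y) (mul x w)"
    using HRp by (elim conjE) assumption
  thus ?thesis by simp
qed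
lemmas HFp = HF[unfolded hyperfield_def]
lemma one_l[simp]: "mul one x = x"
proof -
  have "\<forall>x. mul one x = x"
    using HFp by (elim conjE) assumption
  thus ?thesis by simp
qed
lemma one_r[simp]: "mul x one = x"
  using mul_comm one_l by metis
lemma one_ne: "one \<noteq> z"
proof -
  have "one \<noteq> z"
    using HFp by (elim conjE) assumption
  thus ?thesis .
qed
lemma nz: "x \<noteq> z \<Longrightarrow> y \<noteq> z \<Longrightarrow> mul x y \<noteq> z"
proof -
  have "\<forall>x y. x \<noteq> z \<longrightarrow> y \<noteq> z \<longrightarrow> mul x y \<noteq> z"
    using HFp by (elim conjE) assumption
  thus "x \<noteq> z \<Longrightarrow> y \<noteq> z \<Longrightarrow> mul x y \<noteq> z" by blast
qed
lemma inv_ex: "x \<noteq> z \<Longrightarrow> \<exists>y. mul x y = one"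
proof -
  have "\<forall>x. x \<noteq> z \<longrightarrow> (\<exists>y. mul x y = one)"
    using HFp by (elim conjE) assumption
  thus "x \<noteq> z \<Longrightarrow> \<exists>y. mul x y = one" by blast
qed
lemmas SCp = SCa[unfolded superiorly_canonical_def]
lemma SC1: "x \<in> add x y \<Longrightarrow> add x y = {x}"
proof -
  have "\<forall>x y. x \<in> add x y \<longrightarrow> add x y = {x}"
    using SCp by (elim conjE) assumption
  thus "x \<in> add x y \<Longrightarrow> add x y = {x}" by blast
qed
lemma SC2: "add x y \<inter> add w t \<noteq> {} \<Longrightarrow> add x y \<subseteq> add w t \<or> add w t \<subseteq> add x y"
proof -
  have "\<forall>x y w t. add x y \<inter> add w t \<noteq> {} \<longrightarrow> add x y \<subseteq> add w t \<or> add w t \<subseteq> add x y"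
    using SCp by (elim conjE) assumption
  thus "add x y \<inter> add w t \<noteq> {} \<Longrightarrow> add x y \<subseteq> add w t \<or> add w t \<subseteq> add x y" by blast
qed
lemma SC3: "x \<noteq> y \<Longrightarrow> w \<in> hminus add z x y \<Longrightarrow> t \<in> hminus add z x y \<Longrightarrow> S w = S t"
proof -
  have "\<forall>x y w t. x \<noteq> y \<longrightarrow> w \<in> hminus add z x y \<longrightarrow> t \<in> hminus add z x y \<longrightarrow> hminus add z w w = hminus add z t t"
    using SCp by (elim conjE) assumption
  thus "x \<noteq> y \<Longrightarrow> w \<in> hminus add z x y \<Longrightarrow> t \<in> hminus add z x y \<Longrightarrow> S w = S t" by blast
qed
lemma SC4: "x \<in> S w \<Longrightarrow> y \<notin> S w \<Longrightarrow> S x \<subseteq> S y"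
proof -
  have "\<forall>x y w. x \<in> hminus add z w w \<longrightarrow> y \<notin> hminus add z w w \<longrightarrow> hminus add z x x \<subseteq> hminus add z y y"
    using SCp by (elim conjE) assumption
  thus "x \<in> S w \<Longrightarrow> y \<notin> S w \<Longrightarrow> S x \<subseteq> S y" by blast
qed

lemma hsum_iff: "u \<in> hsum add A B \<longleftrightarrow> (\<exists>a\<in>A. \<exists>b\<in>B. u \<in> add a b)"
  by (auto simp: hsum_def)

lemma N1: "z \<in> add x (N x)"
  unfolding hneg_def using negex[of x] by (metis (mono_tags, lifting) UNIV_I theI)
lemma N2: "z \<in> add x y \<Longrightarrow> y = N x"
  using N1 negex by blast
lemma NN[simp]: "N (N x) = x"
  using N1[of x] by (metis N2 comm)
lemma Nz[simp]: "N z = z"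
  by (metis N2 singletonI zero_r)
lemma hm: "hminus add z x y = add x (N y)" by (simp add: hminus_def)
lemma Sdef: "S x = add x (N x)" by (simp add: hminus_def)

lemma nonempty: "add a b \<noteq> {}"
proof
  assume "add a b = {}"
  hence "hsum add (add a b) {N b} = {}" by (simp add: hsum_def)
  moreover have "a \<in> hsum add {a} (add b (N b))" using N1[of b] by (force simp: hsum_iff)
  ultimately show False using assoc by auto
qed

lemma S_iff: "y \<in> S x \<longleftrightarrow> x \<in> add x y"
proof
  assume "y \<in> S x"
  hence "y \<in> add (N x) x" using Sdef comm by auto
  moreover have "z \<in> add (N x) x" using N1[of "N x"] by simp
  ultimately have "x \<in> add y x" using rev by blast
  thus "x \<in> add x y" using comm by auto
next
  assume "x \<in> add x y"
  thus "y \<in> S x" using rev[OF _ N1[of x]] Sdef by auto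
qed

lemma S_abs: "y \<in> S x \<Longrightarrow> add x y = {x}"
  using S_iff SC1 by blast

lemma z_in_S[simp]: "z \<in> S x" using N1 Sdef by auto
lemma Sz: "S z = {z}" using Sdef by simp

lemma notinS: "x \<noteq> z \<Longrightarrow> x \<notin> S x"
proof
  assume "x \<noteq> z" "x \<in> S x"
  hence "N x \<in> add x (N x)" using rev[of x x "N x" "N x"] N1 Sdef by auto
  hence "add x (N x) = {x}" using S_abs Sdef by auto
  thus False using N1[of x] \<open>x \<noteq> z\<close> by auto
qed

lemma chain: "S a \<subseteq> S b \<or> S b \<subseteq> S a"
  using SC2[of a "N a" b "N b"] z_in_S Sdef by auto

lemma S_addclosed: "a \<in> S c \<Longrightarrow> b \<in> S c \<Longrightarrow> u \<in> add a b \<Longrightarrow> u \<in> S c"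
proof -
  assume a: "a \<in> S c" and b: "b \<in> S c" and u: "u \<in> add a b"
  have "add c u \<subseteq> hsum add {c} (add a b)" using u by (auto simp: hsum_iff)
  also have "\<dots> = hsum add (add c a) {b}" using assoc by simp
  also have "\<dots> = add c b" using S_abs[OF a] by (simp add: hsum_def)
  also have "\<dots> = {c}" using S_abs[OF b] .
  finally have "c \<in> add c u" using nonempty by blast
  thus ?thesis using S_iff by blast
qed

lemma N_mul: "N (mul a x) = mul a (N x)"
proof -
  have "z \<in> mul a ` add x (N x)" using N1[of x] by (metis image_eqI mul_zero_r)
  thus ?thesis using distrib N2 by metis
qed

lemma S_mul: "S (mul a x) = mul a ` S x"
  using distrib N_mul Sdef by metis

lemma S_one: "S x = mul x ` S one"
  using S_mul[of x one] by simp

lemma N_eq: "N x = mul (N one) x"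
  using N_mul[of x one] mul_comm by simp

lemma S_Nclosed: "s \<in> S c \<Longrightarrow> N s \<in> S c"
proof -
  assume "s \<in> S c"
  hence "N s \<in> S (N c)" using N_eq S_mul by (metis image_eqI)
  moreover have "S (N c) = S c" using Sdef comm by (metis NN)
  ultimately show ?thesis by simp
qed

lemma inv_unique: "mul x y = one \<Longrightarrow> mul x y' = one \<Longrightarrow> y = y'"
  by (metis mul_assoc mul_comm one_l)

lemma hinv: assumes "x \<noteq> z" shows "mul x (hinv mul one x) = one"
proof -
  obtain y where y: "mul x y = one" using inv_ex[OF assms] by blast
  have "mul x (THE y. mul x y = one) = one"
    apply (rule theI[of "\<lambda>y. mul x y = one" y])
    using y inv_unique by blast+
  thus ?thesis by (simp add: hinv_def)
qed

lemma downS: "a \<in> S c \<Longrightarrow> b \<notin> S c \<Longrightarrow> S a \<subseteq> S b" using SC4 by blast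

end
context SC begin

abbreviation Ov where "Ov \<equiv> {x. S x \<subseteq> S one}"

lemma O_iff: "x \<in> Ov \<longleftrightarrow> mul x ` S one \<subseteq> S one"
  using S_one[of x] by simp

lemma O_add: "a \<in> Ov \<Longrightarrow> b \<in> Ov \<Longrightarrow> u \<in> add a b \<Longrightarrow> u \<in> Ov"
  unfolding O_iff
proof
  fix t assume a: "mul a ` S one \<subseteq> S one" and b: "mul b ` S one \<subseteq> S one"
    and u: "u \<in> add a b" and t: "t \<in> mul u ` S one"
  then obtain s where s: "s \<in> S one" "t = mul u s" by auto
  have "t \<in> mul s ` add a b" using s u mul_comm by auto
  hence "t \<in> add (mul s a) (mul s b)" using distrib by simp
  moreover have "mul s a \<in> S one" "mul s b \<in> S one" using a b s mul_comm by auto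
  ultimately show "t \<in> S one" using S_addclosed by blast
qed

lemma O_mul: "a \<in> Ov \<Longrightarrow> b \<in> Ov \<Longrightarrow> mul a b \<in> Ov"
proof -
  assume a: "a \<in> Ov" and b: "b \<in> Ov"
  have "S (mul a b) = mul a ` S b" by (rule S_mul)
  also have "\<dots> \<subseteq> mul a ` S one" using b by auto
  also have "\<dots> = S a" using S_one[of a] by simp
  finally show ?thesis using a by auto
qed

lemma SN: "S (N x) = S x" using Sdef comm by (metis NN)

lemma O_N: "x \<in> Ov \<Longrightarrow> N x \<in> Ov" using SN by simp
lemma O_z: "z \<in> Ov" using Sz by simp

lemma O_val: "x \<noteq> z \<Longrightarrow> x \<in> Ov \<or> hinv mul one x \<in> Ov"
proof -
  assume x: "x \<noteq> z"
  define y where "y = hinv mul one x"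
  have xy: "mul y x = one" using hinv[OF x] mul_comm y_def by simp
  show ?thesis
  proof (cases "x \<in> Ov")
    case False
    hence "S one \<subseteq> S x" using chain by blast
    hence "mul y ` S one \<subseteq> mul y ` S x" by auto
    also have "\<dots> = S one" using S_mul[of y x] xy by simp
    finally show ?thesis using S_one[of y] y_def by auto
  qed simp
qed

lemma hsumO: assumes A: "A \<subseteq> Ov" and B: "B \<subseteq> Ov"
  shows "hsum (\<lambda>x y. add x y \<inter> Ov) A B = hsum add A B"
proof (rule set_eqI)
  fix u
  have eq: "\<And>a b. a \<in> A \<Longrightarrow> b \<in> B \<Longrightarrow> add a b \<inter> Ov = add a b"
    using O_add A B by blast
  show "u \<in> hsum (\<lambda>x y. add x y \<inter> Ov) A B \<longleftrightarrow> u \<in> hsum add A B"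
    unfolding hsum_gen using eq by blast
qed

lemma part1: "valuation_hyperring add mul z one Ov"
proof -
  have addO: "x \<in> Ov \<Longrightarrow> y \<in> Ov \<Longrightarrow> add x y \<inter> Ov = add x y" for x y
    using O_add by blast
  have CHO: "canonical_hypergroup Ov (\<lambda>x y. add x y \<inter> Ov) z"
    unfolding canonical_hypergroup_def
  proof (intro conjI ballI)
    show "Ov \<noteq> {}" "z \<in> Ov" using O_z by auto
  next
    fix x y w assume "x \<in> Ov" "y \<in> Ov" "w \<in> Ov"
    hence e1: "add x y \<inter> Ov = add x y" and e2: "add y w \<inter> Ov = add y w"
      and s1: "add x y \<subseteq> Ov" and s2: "add y w \<subseteq> Ov" using addO by blast+
    have w1: "{w} \<subseteq> Ov" "{x} \<subseteq> Ov" using \<open>w \<in> Ov\<close> \<open>x \<in> Ov\<close> by auto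
    show "hsum (\<lambda>x y. add x y \<inter> Ov) (add x y \<inter> Ov) {w} =
          hsum (\<lambda>x y. add x y \<inter> Ov) {x} (add y w \<inter> Ov)"
      unfolding e1 e2 hsumO[OF s1 w1(1)] hsumO[OF w1(2) s2] by (rule assoc)
  next
    fix x y assume "x \<in> Ov" "y \<in> Ov"
    thus "add x y \<inter> Ov \<subseteq> Ov" by blast
    show "add x y \<inter> Ov = add y x \<inter> Ov" using comm by simp
  next
    fix x assume x: "x \<in> Ov"
    thus "add x z \<inter> Ov = {x}" by simp
    show "\<exists>!y. y \<in> Ov \<and> z \<in> add x y \<inter> Ov"
    proof (rule ex1I[of _ "N x"])
      show "N x \<in> Ov \<and> z \<in> add x (N x) \<inter> Ov" using O_N[OF x] N1[of x] O_z by blast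
    next
      fix y assume "y \<in> Ov \<and> z \<in> add x y \<inter> Ov"
      thus "y = N x" using N2 by blast
    qed
  next
    fix x y w x' assume "x \<in> Ov" "y \<in> Ov" "w \<in> Ov" "x' \<in> Ov"
    thus "w \<in> add x y \<inter> Ov \<longrightarrow> z \<in> add x x' \<inter> Ov \<longrightarrow> y \<in> add w x' \<inter> Ov"
      using rev by blast
  qed
  have "hyperring Ov (\<lambda>x y. add x y \<inter> Ov) mul z"
    unfolding hyperring_def
  proof (intro conjI ballI CHO)
    fix x y w assume "x \<in> Ov" "y \<in> Ov" "w \<in> Ov"
    thus "mul x ` (add y w \<inter> Ov) = add (mul x y) (mul x w) \<inter> Ov"
      using addO O_mul distrib by simp
    show "mul (mul x y) w = mul x (mul y w)" by (rule mul_assoc)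
  next
    fix x y assume "x \<in> Ov" "y \<in> Ov"
    thus "mul x y \<in> Ov" using O_mul by blast
    show "mul x y = mul y x" by (rule mul_comm)
  next
    fix x show "mul z x = z" by simp
  qed
  thus ?thesis
    unfolding valuation_hyperring_def relational_subhyperring_def
    using O_mul O_val by blast
qed

end
context SC begin

lemma absorb: "q \<in> S c \<Longrightarrow> c = x \<or> c = y \<Longrightarrow> w \<in> add x y \<Longrightarrow> add w q \<subseteq> add x y"
proof -
  assume q: "q \<in> S c" and c: "c = x \<or> c = y" and w: "w \<in> add x y"
  show ?thesis
  proof (cases "c = x")
    case True
    have "add w q \<subseteq> hsum add (add y x) {q}" using w comm[of x y] by (auto simp: hsum_iff)
    also have "\<dots> = hsum add {y} (add x q)" by (rule assoc)
    also have "\<dots> = add y x" using S_abs[OF q] True by (simp add: hsum_def)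
    finally show ?thesis using comm[of x y] by simp
  next
    case False
    hence cy: "c = y" using c by simp
    have "add w q \<subseteq> hsum add (add x y) {q}" using w by (auto simp: hsum_iff)
    also have "\<dots> = hsum add {x} (add y q)" by (rule assoc)
    also have "\<dots> = add x y" using S_abs[OF q] cy by (simp add: hsum_def)
    finally show ?thesis .
  qed
qed

lemma N_add: "t \<in> add x y \<Longrightarrow> N t \<in> add (N x) (N y)"
proof -
  assume "t \<in> add x y"
  hence "mul (N one) t \<in> mul (N one) ` add x y" by (rule imageI)
  also have "mul (N one) ` add x y = add (mul (N one) x) (mul (N one) y)" by (rule distrib)
  finally show ?thesis unfolding N_eq[of t] N_eq[of x] N_eq[of y] .
qed

lemma core: "w \<in> add x y \<Longrightarrow> S x \<subseteq> S c \<Longrightarrow> S y \<subseteq> S c \<Longrightarrow> c = x \<or> c = y \<Longrightarrow>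
   (t \<in> add x y \<longleftrightarrow> add w (N t) \<subseteq> S c)"
proof
  assume w: "w \<in> add x y" and sx: "S x \<subseteq> S c" and sy: "S y \<subseteq> S c"
  assume t: "t \<in> add x y"
  show "add w (N t) \<subseteq> S c"
  proof
    fix s assume s: "s \<in> add w (N t)"
    have "s \<in> hsum add {w} (add (N x) (N y))" using s N_add[OF t] by (auto simp: hsum_iff)
    hence "s \<in> hsum add (add w (N x)) {N y}" using assoc by simp
    then obtain a' where a': "a' \<in> add w (N x)" "s \<in> add a' (N y)" by (auto simp: hsum_iff)
    have "a' \<in> hsum add (add y x) {N x}" using a'(1) w comm[of x y] by (auto simp: hsum_iff)
    hence "a' \<in> hsum add {y} (add x (N x))" using assoc by simp
    then obtain a'' where a'': "a'' \<in> S x" "a' \<in> add y a''" using Sdef by (auto simp: hsum_iff)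
    have "s \<in> hsum add (add a'' y) {N y}" using a'(2) a''(2) comm[of y a''] by (auto simp: hsum_iff)
    hence "s \<in> hsum add {a''} (add y (N y))" using assoc by simp
    then obtain b where b: "b \<in> S y" "s \<in> add a'' b" using Sdef by (auto simp: hsum_iff)
    show "s \<in> S c" using S_addclosed[of a'' c b s] a'' b sx sy by blast
  qed
next
  assume w: "w \<in> add x y" and c: "c = x \<or> c = y"
  assume sub: "add w (N t) \<subseteq> S c"
  obtain s where s: "s \<in> add w (N t)" using nonempty by blast
  have "s \<in> add (N t) w" using s comm[of w "N t"] by simp
  moreover have "z \<in> add (N t) t" using N1[of "N t"] by simp
  ultimately have "w \<in> add s t" using rev by blast
  hence "t \<in> add w (N s)" using rev N1 by blast
  moreover have "N s \<in> S c" using S_Nclosed s sub by blast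
  ultimately show "t \<in> add x y" using absorb[OF _ c w] by blast
qed

end

locale SCV = SC add mul z one for add :: "'a \<Rightarrow> 'a \<Rightarrow> 'a set" and mul z one +
  fixes v :: "'a \<Rightarrow> ('g::linordered_ab_group_add) extended"
  assumes V: "valuation add mul z v" and VR: "valuation_ring v = {x. S x \<subseteq> S one}"
begin

lemma vz: "v x = Pinf \<longleftrightarrow> x = z" using V unfolding valuation_def by blast
lemma vmul: "v (mul x y) = v x + v y" using V unfolding valuation_def by blast
lemma vrange: "range v = insert Pinf (range Fin)" using V unfolding valuation_def by blast
lemma vsurj: "\<exists>x. v x = Fin g"
proof -
  have "Fin g \<in> range v" using vrange by auto
  thus ?thesis by auto
qed
lemma vfin: "x \<noteq> z \<Longrightarrow> \<exists>g. v x = Fin g"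
proof -
  assume "x \<noteq> z"
  hence "v x \<noteq> Pinf" using vz by simp
  moreover have "v x \<in> insert Pinf (range Fin)" using vrange by blast
  ultimately show ?thesis by auto
qed
lemma vO: "x \<in> Ov \<longleftrightarrow> v x \<ge> 0"
  using VR unfolding valuation_ring_def by blast

lemma v_one: "v one = 0"
proof -
  obtain g where g: "v one = Fin g" using vfin one_ne by blast
  have "v one = v one + v one" using vmul[of one one] by simp
  hence "g = g + g" using g by simp
  hence "g = 0" by simp
  thus ?thesis using g by (simp add: zero_extended_def)
qed

lemma vinv: "v x = Fin a \<Longrightarrow> mul x y = one \<Longrightarrow> v y = Fin (- a)"
proof -
  assume a: "v x = Fin a" and xy: "mul x y = one"
  have "v x + v y = 0" using vmul[of x y] xy v_one by simp
  hence "v y \<noteq> Pinf" using a by (auto simp: zero_extended_def)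
  then obtain b where b: "v y = Fin b" using vz vfin by blast
  have "a + b = 0" using \<open>v x + v y = 0\<close> a b by (simp add: zero_extended_def)
  hence "- a = b" by (rule minus_unique)
  thus ?thesis using b by simp
qed

lemma inj_mul: "mul a' a = one \<Longrightarrow> mul a ` X \<subseteq> mul a ` Y \<longleftrightarrow> X \<subseteq> Y"
proof -
  assume aa: "mul a' a = one"
  have "inj (mul a)" by (rule injI) (metis aa mul_assoc one_l)
  thus ?thesis by (simp add: inj_image_subset_iff)
qed

lemma key: "a \<noteq> z \<Longrightarrow> b \<noteq> z \<Longrightarrow> (v a \<le> v b \<longleftrightarrow> S b \<subseteq> S a)"
proof -
  assume a: "a \<noteq> z" and b: "b \<noteq> z"
  obtain \<alpha> where al: "v a = Fin \<alpha>" using vfin a by blast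
  obtain \<beta> where be: "v b = Fin \<beta>" using vfin b by blast
  define a' where "a' = hinv mul one a"
  have aa': "mul a a' = one" using hinv[OF a] a'_def by simp
  have a'a: "mul a' a = one" using aa' mul_comm[of a a'] by simp
  have va': "v a' = Fin (- \<alpha>)" using vinv[OF al aa'] .
  define q where "q = mul a' b"
  have bq: "b = mul a q" unfolding q_def using aa' mul_assoc by (metis one_l)
  have vq: "v q = Fin (- \<alpha> + \<beta>)" unfolding q_def using vmul va' be by simp
  have "S b = mul a ` S q" using bq S_mul by simp
  moreover have "S a = mul a ` S one" by (rule S_one)
  ultimately have "S b \<subseteq> S a \<longleftrightarrow> S q \<subseteq> S one" using inj_mul[OF a'a] by simp
  also have "\<dots> \<longleftrightarrow> v q \<ge> 0" using vO by simp
  also have "\<dots> \<longleftrightarrow> \<alpha> \<le> \<beta>" using vq by (simp add: algebra_simps zero_extended_def)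
  finally show ?thesis using al be by simp
qed

lemma level: "s \<noteq> z \<Longrightarrow> s' \<noteq> z \<Longrightarrow> v s = v s' \<Longrightarrow> s \<in> S one \<Longrightarrow> s' \<in> S one"
proof -
  assume s: "s \<noteq> z" and s': "s' \<noteq> z" and e: "v s = v s'" and si: "s \<in> S one"
  obtain \<sigma> where sg: "v s = Fin \<sigma>" using vfin s by blast
  define u where "u = mul (hinv mul one s) s'"
  have ss: "mul s (hinv mul one s) = one" using hinv[OF s] by simp
  have vs': "v s' = Fin \<sigma>" using e sg by simp
  have "v u = v (hinv mul one s) + v s'" unfolding u_def by (rule vmul)
  hence vu: "v u = Fin 0" using vinv[OF sg ss] vs' by simp
  hence "v u = v one" using v_one by (simp add: zero_extended_def)
  moreover have "u \<noteq> z" using vu vz[of u] by auto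
  ultimately have "S u = S one" using key[OF _ one_ne, of u] key[OF one_ne, of u] by auto
  have "s' = mul s u" unfolding u_def using ss mul_assoc by (metis one_l)
  hence "s' = mul u s" using mul_comm[of s u] by simp
  moreover have "mul u s \<in> S u" using S_one[of u] si by simp
  ultimately show ?thesis using \<open>S u = S one\<close> by simp
qed

definition rho :: "'g set" where "rho = {\<gamma>. \<forall>s. v s = Fin \<gamma> \<longrightarrow> s \<notin> S one}"

lemma rho_init: "initial_segment rho"
  unfolding initial_segment_def
proof (intro ballI allI impI)
  fix \<delta> \<gamma> assume d: "\<delta> \<in> rho" and lt: "\<gamma> < \<delta>"
  show "\<gamma> \<in> rho" unfolding rho_def
  proof (intro CollectI allI impI notI)
    fix s assume vs: "v s = Fin \<gamma>" and si: "s \<in> S one"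
    obtain s0 where s0: "v s0 = Fin \<delta>" using vsurj by blast
    have "s0 \<notin> S one" using d s0 unfolding rho_def by blast
    hence "S s \<subseteq> S s0" using downS si by blast
    moreover have "s \<noteq> z" "s0 \<noteq> z" using vs s0 vz[of s] vz[of s0] by auto
    ultimately have "v s0 \<le> v s" using key by blast
    thus False using vs s0 lt by simp
  qed
qed

lemma rho0: "0 \<in> rho"
  unfolding rho_def
proof (intro CollectI allI impI notI)
  fix s assume vs: "v s = Fin 0" and si: "s \<in> S one"
  have sz: "s \<noteq> z" using vs vz[of s] by auto
  have "v s = v one" using vs v_one by (simp add: zero_extended_def)
  hence "S s = S one" using key[OF sz one_ne] key[OF one_ne sz] by auto
  thus False using notinS[OF sz] si by simp
qed

lemma K: "c \<noteq> z \<Longrightarrow> above_seg (v s) rho (v c) \<longleftrightarrow> s \<in> S c"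
proof -
  assume c: "c \<noteq> z"
  obtain g where g: "v c = Fin g" using vfin c by blast
  show ?thesis
  proof (cases "s = z")
    case True
    hence "v s = Pinf" using vz[of s] by simp
    thus ?thesis using True g unfolding above_seg_def seg_shift_def by auto
  next
    case False
    obtain \<sigma> where sg: "v s = Fin \<sigma>" using vfin False by blast
    define c' where "c' = hinv mul one c"
    have cc': "mul c c' = one" using hinv[OF c] c'_def by simp
    define s' where "s' = mul c' s"
    have "v s' = v c' + v s" unfolding s'_def by (rule vmul)
    hence vs': "v s' = Fin (\<sigma> - g)" using vinv[OF g cc'] sg by (simp add: algebra_simps)
    have s'z: "s' \<noteq> z" using vs' vz[of s'] by auto
    have ss': "s = mul c s'" unfolding s'_def using cc' mul_assoc[of c c' s] by simp
    have "above_seg (v s) rho (v c) \<longleftrightarrow> \<sigma> - g \<notin> rho"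
      unfolding above_seg_def seg_shift_def sg g
    proof
      assume "Fin \<sigma> \<notin> (\<lambda>\<delta>. Fin \<delta> + Fin g) ` rho"
      thus "\<sigma> - g \<notin> rho"
      proof (rule contrapos_nn)
        assume "\<sigma> - g \<in> rho"
        moreover have "Fin \<sigma> = Fin (\<sigma> - g) + Fin g" by simp
        ultimately show "Fin \<sigma> \<in> (\<lambda>\<delta>. Fin \<delta> + Fin g) ` rho" by (rule rev_image_eqI)
      qed
    next
      assume nr: "\<sigma> - g \<notin> rho"
      show "Fin \<sigma> \<notin> (\<lambda>\<delta>. Fin \<delta> + Fin g) ` rho"
      proof
        assume "Fin \<sigma> \<in> (\<lambda>\<delta>. Fin \<delta> + Fin g) ` rho"
        then obtain \<delta> where d: "\<delta> \<in> rho" "Fin \<sigma> = Fin \<delta> + Fin g" by blast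
        hence "\<delta> = \<sigma> - g" by (simp add: algebra_simps)
        thus False using d nr by simp
      qed
    qed
    also have "\<dots> \<longleftrightarrow> s' \<in> S one"
    proof
      assume "\<sigma> - g \<notin> rho"
      then obtain s'' where "v s'' = Fin (\<sigma> - g)" "s'' \<in> S one" unfolding rho_def by blast
      thus "s' \<in> S one" using level[of s'' s'] vs' s'z vz[of s''] by auto
    next
      assume "s' \<in> S one" thus "\<sigma> - g \<notin> rho" using vs' unfolding rho_def by blast
    qed
    also have "\<dots> \<longleftrightarrow> s \<in> S c"
    proof
      assume "s' \<in> S one" thus "s \<in> S c" using ss' S_one[of c] by simp
    next
      assume "s \<in> S c"
      then obtain q where q: "q \<in> S one" "s = mul c q" using S_one[of c] by auto
      have "s' = q" unfolding s'_def using q(2) cc' mul_assoc[of c' c q] mul_comm[of c' c] by simp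
      thus "s' \<in> S one" using q by simp
    qed
    finally show ?thesis .
  qed
qed

lemma part2: "krasner_valued_hyperfield add mul z one v"
  unfolding krasner_valued_hyperfield_def
proof (intro conjI)
  show "hyperfield add mul z one" by (rule HF)
  show "valuation add mul z v" by (rule V)
  show "\<forall>x y. z \<notin> add x y \<longrightarrow> (\<exists>g. v ` add x y = {g})"
  proof (intro allI impI)
    fix x y assume nz0: "z \<notin> add x y"
    obtain w where w: "w \<in> add x y" using nonempty by blast
    have xn: "x \<noteq> N y"
    proof
      assume "x = N y"
      hence "add x y = add y (N y)" using comm[of x y] by simp
      thus False using nz0 N1[of y] by simp
    qed
    have hmx: "hminus add z x (N y) = add x y" by (simp add: hm)
    have eqS: "S t = S w" if t: "t \<in> add x y" for t
      using SC3[OF xn, of t w] t w hmx by simp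
    have wz: "w \<noteq> z" using w nz0 by auto
    have "v ` add x y = {v w}"
    proof (rule set_eqI, rule iffI)
      fix g assume "g \<in> v ` add x y"
      then obtain t where t: "t \<in> add x y" "g = v t" by auto
      have tz: "t \<noteq> z" using t nz0 by auto
      have "v t \<le> v w" using key[OF tz wz] eqS[OF t(1)] by simp
      moreover have "v w \<le> v t" using key[OF wz tz] eqS[OF t(1)] by simp
      ultimately have "v t = v w" by (rule order_antisym)
      thus "g \<in> {v w}" using t by simp
    next
      fix g assume "g \<in> {v w}"
      thus "g \<in> v ` add x y" using w by simp
    qed
    thus "\<exists>g. v ` add x y = {g}" by blast
  qed
  show "\<exists>\<rho>. initial_segment \<rho> \<and> 0 \<in> \<rho> \<and>
        (\<forall>x y w t. \<not> (x = z \<and> y = z) \<longrightarrow> w \<in> add x y \<longrightarrow>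
           (t \<in> add x y \<longleftrightarrow>
              (\<forall>s\<in>hminus add z w t. above_seg (v s) \<rho> (min (v x) (v y)))))"
  proof (rule exI[of _ rho], intro conjI rho_init rho0 allI impI)
    fix x y w t assume nb: "\<not> (x = z \<and> y = z)" and w: "w \<in> add x y"
    define c where "c = (if v x \<le> v y then x else y)"
    have mc: "min (v x) (v y) = v c" unfolding c_def by (simp add: min_def)
    have cz: "c \<noteq> z"
    proof
      assume cz: "c = z"
      show False
      proof (cases "v x \<le> v y")
        case True
        hence "x = z" using cz unfolding c_def by simp
        hence "v y = Pinf" using True vz[of x] by simp
        thus False using nb \<open>x = z\<close> vz[of y] by simp
      next
        case False
        hence "y = z" using cz unfolding c_def by simp
        hence "v y = Pinf" using vz[of y] by simp
        thus False using False by simp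
      qed
    qed
    have cxy: "c = x \<or> c = y" unfolding c_def by simp
    have sub: "S u \<subseteq> S c" if "u = x \<or> u = y" for u
    proof (cases "u = z")
      case True thus ?thesis using Sz by simp
    next
      case False
      have "v c \<le> v u" using that unfolding c_def by auto
      thus ?thesis using key[OF cz False] by simp
    qed
    have "t \<in> add x y \<longleftrightarrow> add w (N t) \<subseteq> S c"
      using core[OF w sub sub cxy] by simp
    also have "\<dots> \<longleftrightarrow> (\<forall>s\<in>hminus add z w t. above_seg (v s) rho (min (v x) (v y)))"
      unfolding mc hm K[OF cz] by (simp only: subset_eq)
    finally show "t \<in> add x y \<longleftrightarrow> (\<forall>s\<in>hminus add z w t. above_seg (v s) rho (min (v x) (v y)))" .
  qed
qed

end
theorem proposition4p23:
  fixes add :: "'a \<Rightarrow> 'a \<Rightarrow> 'a set" and mul :: "'a \<Rightarrow> 'a \<Rightarrow> 'a" and z one :: 'a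
  assumes "hyperfield add mul z one"
    and "superiorly_canonical add z"
  shows "valuation_hyperring add mul z one {x. hminus add z x x \<subseteq> hminus add z one one} \<and>
         (\<forall>v :: 'a \<Rightarrow> ('g::linordered_ab_group_add) extended.
           valuation add mul z v \<longrightarrow>
           valuation_ring v = {x. hminus add z x x \<subseteq> hminus add z one one} \<longrightarrow>
           krasner_valued_hyperfield add mul z one v)"
proof -
  interpret SC add mul z one using assms by (rule SC.intro)
  show ?thesis
  proof (intro conjI allI impI)
    show "valuation_hyperring add mul z one {x. hminus add z x x \<subseteq> hminus add z one one}"
      by (rule part1)
  next
    fix v :: "'a \<Rightarrow> 'g extended"
    assume a1: "valuation add mul z v"
      and a2: "valuation_ring v = {x. hminus add z x x \<subseteq> hminus add z one one}"
    interpret SCV add mul z one v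
      by (rule SCV.intro, rule SC.intro[OF assms], rule SCV_axioms.intro[OF a1 a2])
    show "krasner_valued_hyperfield add mul z one v" by (rule part2)
  qed
qed

end
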